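(* Let $(X,<)$ be a linearly ordered set. For all ultrafilters $u,v\in\beta X$: $$u\,\tilde<\,v \iff \mathrm{supp}(u)<\mathrm{supp}(v)\ \vee\ \mathrm{supp}(u)=\mathrm{supp}(v)=I_u=I_v,$$ $$u\,\tilde\le\,v \iff \mathrm{supp}(u)<\mathrm{supp}(v)\ \vee\ \mathrm{supp}(u)=\mathrm{supp}(v)=I_u=I_v\ \vee\ \exists x\in X\,(u=v=\tilde x),$$ $$u\,\tilde>\,v \iff \mathrm{supp}(u)>\mathrm{supp}(v)\ \vee\ \mathrm{supp}(u)=\mathrm{supp}(v)=J_u=J_v,$$ $$u\,\tilde\ge\,v \iff \mathrm{supp}(u)>\mathrm{supp}(v)\ \vee\ \mathrm{supp}(u)=\mathrm{supp}(v)=J_u=J_v\ \vee\ \exists x\in X\,(u=v=\tilde x).$$ Consequently, on non-principal ultrafilters, $\tilde<$ coincides with $\tilde\le$ and $\tilde>$ coincides with $\tilde\ge$.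
   Context: $(X,<)$ is a linear order, $\le$ its reflexive version, $>$ and $\ge$ the converse relations. $\beta X$ is the set of all ultrafilters over $X$; $\tilde x=\{S\subseteq X:x\in S\}$ for $x\in X$. For a binary relation $R$ on $X$, its ultrafilter extension $\tilde R$ on $\beta X$ is defined by $u\,\tilde R\,v\iff\{x\in X:\{y\in X:x\,R\,y\}\in v\}\in u$. Initial segments are downward closed subsets, final segments upward closed subsets. $I_u=\bigcap\{I\in u: I\text{ initial segment}\}$, $J_u=\bigcap\{J\in u: J\text{ final segment}\}$. For non-principal $u$ exactly one of $I_u\in u$, $J_u\in u$ holds. Supports: if $u=\tilde x$ then $\mathrm{supp}(u)=\{x\}$ (a "point"); if $u$ is non-principal and $I_u\in u$ then $\mathrm{supp}(u)$ is $I_u$ regarded as a left half-cut (a nonempty initial segment with no greatest element); if $u$ is non-principal and $J_u\in u$ then $\mathrm{supp}(u)$ is $J_u$ regarded as a right half-cut (a nonempty final segment with no least element). Two supports are equal iff they are of the same kind (point/left/right) and equal as sets. The notation "$\mathrm{supp}(u)=I_u$" means "$u$ is non-principal and $I_u\in u$", and "$\mathrm{supp}(u)=J_u$" means "$u$ is non-principal and $J_u\in u$"; thus $\mathrm{supp}(u)=\mathrm{supp}(v)=I_u=I_v$ means both are non-principal, $I_u\in u$, $I_v\in v$ and $I_u=I_v$ (similarly for $J$). The natural linear order on supports (points $\{x\}$, left half-cuts $I$, right half-cuts $J$): $\{x\}<\{y\}$ iff $x<y$; $\{x\}<I$ iff $x\in I$, and $I<\{x\}$ iff $x\notin I$; $\{x\}<J$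 iff $x\notin J$, and $J<\{x\}$ iff $x\in J$; $I<I'$ iff $I\subsetneq I'$; $J<J'$ iff $J\supsetneq J'$; $I<J$ iff $I\cap J=\emptyset$, and $J<I$ iff $I\cap J\neq\emptyset$. Write $\le$ for its reflexive version. *)

theory Defs
  imports Main
begin

text \<open>The linear order X is the universe of a type 'a of class linorder.
  Ultrafilters over X are represented as sets of subsets of UNIV.\<close>

definition is_ultrafilter :: "'a set set \<Rightarrow> bool" where
  "is_ultrafilter U \<longleftrightarrow>
     UNIV \<in> U \<and> {} \<notin> U \<and>
     (\<forall>S T. S \<in> U \<and> S \<subseteq> T \<longrightarrow> T \<in> U) \<and>
     (\<forall>S T. S \<in> U \<and> T \<in> U \<longrightarrow> S \<inter> T \<in> U) \<and>
     (\<forall>S. S \<in> U \<or> - S \<in> U)"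

definition principal_uf :: "'a \<Rightarrow> 'a set set" where
  "principal_uf x = {S. x \<in> S}"

definition is_principal :: "'a set set \<Rightarrow> bool" where
  "is_principal u \<longleftrightarrow> (\<exists>x. u = principal_uf x)"

definition uf_ext :: "('a \<Rightarrow> 'a \<Rightarrow> bool) \<Rightarrow> 'a set set \<Rightarrow> 'a set set \<Rightarrow> bool" where
  "uf_ext R u v \<longleftrightarrow> {x. {y. R x y} \<in> v} \<in> u"

definition initial_seg :: "'a::linorder set \<Rightarrow> bool" where
  "initial_seg I \<longleftrightarrow> (\<forall>x y. y \<in> I \<and> x \<le> y \<longrightarrow> x \<in> I)"

definition final_seg :: "'a::linorder set \<Rightarrow> bool" where
  "final_seg J \<longleftrightarrow> (\<forall>x y. y \<in> J \<and> y \<le> x \<longrightarrow> x \<in> J)"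

definition I_of :: "'a::linorder set set \<Rightarrow> 'a set" where
  "I_of u = \<Inter>{I \<in> u. initial_seg I}"

definition J_of :: "'a::linorder set set \<Rightarrow> 'a set" where
  "J_of u = \<Inter>{J \<in> u. final_seg J}"

datatype 'a support = Point 'a | LeftCut "'a set" | RightCut "'a set"

definition supp :: "'a::linorder set set \<Rightarrow> 'a support" where
  "supp u = (if is_principal u then Point (THE x. u = principal_uf x)
             else if I_of u \<in> u then LeftCut (I_of u) else RightCut (J_of u))"

fun supp_less :: "'a::linorder support \<Rightarrow> 'a support \<Rightarrow> bool" where
  "supp_less (Point x) (Point y) \<longleftrightarrow> x < y"
| "supp_less (Point x) (LeftCut I) \<longleftrightarrow> x \<in> I"
| "supp_less (LeftCut I) (Point x) \<longleftrightarrow> x \<notin> I"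
| "supp_less (Point x) (RightCut J) \<longleftrightarrow> x \<notin> J"
| "supp_less (RightCut J) (Point x) \<longleftrightarrow> x \<in> J"
| "supp_less (LeftCut I) (LeftCut I') \<longleftrightarrow> I \<subset> I'"
| "supp_less (RightCut J) (RightCut J') \<longleftrightarrow> J \<supset> J'"
| "supp_less (LeftCut I) (RightCut J) \<longleftrightarrow> I \<inter> J = {}"
| "supp_less (RightCut J) (LeftCut I) \<longleftrightarrow> I \<inter> J \<noteq> {}"

end

theory Submission
  imports Defs
begin

lemma uf_up: "is_ultrafilter u \<Longrightarrow> S \<in> u \<Longrightarrow> S \<subseteq> T \<Longrightarrow> T \<in> u"
  unfolding is_ultrafilter_def by blast
lemma uf_int: "is_ultrafilter u \<Longrightarrow> S \<in> u \<Longrightarrow> T \<in> u \<Longrightarrow> S \<inter> T \<in> u"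
  unfolding is_ultrafilter_def by blast
lemma uf_compl: "is_ultrafilter u \<Longrightarrow> S \<notin> u \<Longrightarrow> - S \<in> u"
  unfolding is_ultrafilter_def by blast
lemma uf_empty: "is_ultrafilter u \<Longrightarrow> {} \<notin> u"
  unfolding is_ultrafilter_def by blast
lemma uf_ne: "is_ultrafilter u \<Longrightarrow> S \<in> u \<Longrightarrow> S \<noteq> {}"
  unfolding is_ultrafilter_def by blast
lemma uf_not_both: "is_ultrafilter u \<Longrightarrow> S \<in> u \<Longrightarrow> - S \<notin> u"
  using uf_int[of u S "-S"] uf_empty[of u] by auto
lemma uf_compl_iff: "is_ultrafilter u \<Longrightarrow> (- S \<in> u) = (S \<notin> u)"
  using uf_compl uf_not_both by blast

lemma principal_inj: "principal_uf x = principal_uf y \<Longrightarrow> x = y"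
  unfolding principal_uf_def by (metis insertI1 mem_Collect_eq singletonD)

lemma singleton_principal:
  assumes "is_ultrafilter u" "{x} \<in> u" shows "u = principal_uf x"
proof -
  have "S \<in> u \<longleftrightarrow> x \<in> S" for S
  proof
    assume "S \<in> u"
    then have "S \<inter> {x} \<in> u" using uf_int assms by blast
    then show "x \<in> S" using uf_ne[OF assms(1)] by blast
  next
    assume "x \<in> S" then show "S \<in> u" using uf_up[OF assms] by blast
  qed
  then show ?thesis unfolding principal_uf_def by auto
qed

lemma supp_P: "supp (principal_uf x) = Point x"
proof -
  have "(THE y. principal_uf x = principal_uf y) = x"
    by (rule the_equality) (auto dest: principal_inj)
  then show ?thesis unfolding supp_def is_principal_def by auto
qed

lemma supp_L: "\<not> is_principal u \<Longrightarrow> I_of u \<in> u \<Longrightarrow> supp u = LeftCut (I_of u)"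
  unfolding supp_def by auto
lemma supp_R: "\<not> is_principal u \<Longrightarrow> I_of u \<notin> u \<Longrightarrow> supp u = RightCut (J_of u)"
  unfolding supp_def by auto

lemma I_initial: "initial_seg (I_of u)"
  unfolding initial_seg_def I_of_def by auto
lemma J_final: "final_seg (J_of u)"
  unfolding final_seg_def J_of_def by auto

lemma init_lt: "initial_seg {x. x < (y::'a::linorder)}" unfolding initial_seg_def by auto
lemma init_le: "initial_seg {x. x \<le> (y::'a::linorder)}" unfolding initial_seg_def by auto
lemma fin_gt: "final_seg {x. (y::'a::linorder) < x}" unfolding final_seg_def by auto
lemma fin_ge: "final_seg {x. (y::'a::linorder) \<le> x}" unfolding final_seg_def by auto

lemma I_sub: "S \<in> u \<Longrightarrow> initial_seg S \<Longrightarrow> I_of u \<subseteq> S"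
  unfolding I_of_def by auto
lemma J_sub: "S \<in> u \<Longrightarrow> final_seg S \<Longrightarrow> J_of u \<subseteq> S"
  unfolding J_of_def by auto

lemma IJ_cover:
  fixes u :: "'a::linorder set set"
  assumes "is_ultrafilter u" shows "I_of u \<union> J_of u = UNIV"
proof (rule ccontr)
  assume "I_of u \<union> J_of u \<noteq> UNIV"
  then obtain x where x: "x \<notin> I_of u" "x \<notin> J_of u" by auto
  from x(1) obtain I where I: "I \<in> u" "initial_seg I" "x \<notin> I" unfolding I_of_def by auto
  from x(2) obtain J where J: "J \<in> u" "final_seg J" "x \<notin> J" unfolding J_of_def by auto
  have "I \<inter> J = {}"
  proof (rule ccontr)
    assume "I \<inter> J \<noteq> {}"
    then obtain z where "z \<in> I" "z \<in> J" by auto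
    then show False using I J unfolding initial_seg_def final_seg_def
      by (metis linear)
  qed
  then show False using uf_int[OF assms I(1) J(1)] uf_empty[OF assms] by auto
qed

lemma J_in: "is_ultrafilter u \<Longrightarrow> I_of u \<notin> u \<Longrightarrow> J_of u \<in> u"
  using IJ_cover[of u] uf_compl[of u "I_of u"] uf_up[of u "- I_of u" "J_of u"] by blast

lemma IJ_both:
  fixes u :: "'a::linorder set set"
  assumes u: "is_ultrafilter u" and I: "I_of u \<in> u" and J: "J_of u \<in> u"
  shows "is_principal u"
proof -
  have IJ: "I_of u \<inter> J_of u \<in> u" using uf_int[OF u I J] .
  then obtain x where x: "x \<in> I_of u" "x \<in> J_of u" using uf_ne[OF u] by blast
  have "I_of u \<inter> J_of u \<subseteq> {x}"
  proof
    fix y assume y: "y \<in> I_of u \<inter> J_of u"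
    have False if "a < b" "a \<in> I_of u" "a \<in> J_of u" "b \<in> I_of u" "b \<in> J_of u" for a b
    proof (cases "{z. z \<le> a} \<in> u")
      case True
      then have "I_of u \<subseteq> {z. z \<le> a}" using I_sub init_le by blast
      then show False using that by auto
    next
      case False
      then have "- {z. z \<le> a} \<in> u" using uf_compl[OF u] by blast
      moreover have "- {z. z \<le> a} = {z. a < z}" by auto
      ultimately have "J_of u \<subseteq> {z. a < z}" using J_sub fin_gt by metis
      then show False using that by auto
    qed
    then show "y \<in> {x}" using x y by (metis IntE linorder_neqE singletonI)
  qed
  then have "{x} \<in> u" using uf_up[OF u IJ] by blast
  then show ?thesis using singleton_principal[OF u] unfolding is_principal_def by blast
qed

lemma I_nomax:
  fixes u :: "'a::linorder set set"
  assumes u: "is_ultrafilter u" and np: "\<not> is_principal u" and I: "I_of u \<in> u"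
    and x: "x \<in> I_of u"
  shows "\<exists>y\<in>I_of u. x < y"
proof (rule ccontr)
  assume "\<not> ?thesis"
  then have le: "I_of u \<subseteq> {z. z \<le> x}" by (auto simp: not_less)
  have "{z. z < x} \<notin> u"
  proof
    assume "{z. z < x} \<in> u"
    then have "I_of u \<subseteq> {z. z < x}" using I_sub init_lt by blast
    then show False using x by auto
  qed
  then have "- {z. z < x} \<in> u" using uf_compl[OF u] by blast
  then have "I_of u \<inter> - {z. z < x} \<in> u" using uf_int[OF u I] by blast
  moreover have "I_of u \<inter> - {z. z < x} \<subseteq> {x}" using le by auto
  ultimately have "{x} \<in> u" using uf_up[OF u] by blast
  then show False using singleton_principal[OF u] np unfolding is_principal_def by blast
qed

lemma J_nomin:
  fixes u :: "'a::linorder set set"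
  assumes u: "is_ultrafilter u" and np: "\<not> is_principal u" and J: "J_of u \<in> u"
    and x: "x \<in> J_of u"
  shows "\<exists>y\<in>J_of u. y < x"
proof (rule ccontr)
  assume "\<not> ?thesis"
  then have le: "J_of u \<subseteq> {z. x \<le> z}" by (auto simp: not_less)
  have "{z. x < z} \<notin> u"
  proof
    assume "{z. x < z} \<in> u"
    then have "J_of u \<subseteq> {z. x < z}" using J_sub fin_gt by blast
    then show False using x by auto
  qed
  then have "- {z. x < z} \<in> u" using uf_compl[OF u] by blast
  then have "J_of u \<inter> - {z. x < z} \<in> u" using uf_int[OF u J] by blast
  moreover have "J_of u \<inter> - {z. x < z} \<subseteq> {x}" using le by auto
  ultimately have "{x} \<in> u" using uf_up[OF u] by blast
  then show False using singleton_principal[OF u] np unfolding is_principal_def by blast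
qed

definition Aset :: "'a::linorder set set \<Rightarrow> 'a set" where
  "Aset v = {x. {y. x < y} \<in> v}"
definition Bset :: "'a::linorder set set \<Rightarrow> 'a set" where
  "Bset v = {x. {y. x \<le> y} \<in> v}"

lemma A_P: "Aset (principal_uf y) = {x. x < y}"
  unfolding Aset_def principal_uf_def by auto
lemma B_P: "Bset (principal_uf y) = {x. x \<le> y}"
  unfolding Bset_def principal_uf_def by auto

lemma A_L:
  fixes v :: "'a::linorder set set"
  assumes v: "is_ultrafilter v" and np: "\<not> is_principal v" and I: "I_of v \<in> v"
  shows "Aset v = I_of v"
proof -
  have "x \<in> Aset v \<longleftrightarrow> x \<in> I_of v" for x
  proof
    assume "x \<in> Aset v"
    then have gx: "{y. x < y} \<in> v" unfolding Aset_def by auto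
    show "x \<in> I_of v"
    proof (rule ccontr)
      assume nx: "x \<notin> I_of v"
      have "I_of v \<inter> {y. x < y} = {}"
        using nx I_initial[of v] unfolding initial_seg_def by (auto dest: less_imp_le)
      then show False using uf_int[OF v I gx] uf_empty[OF v] by auto
    qed
  next
    assume x: "x \<in> I_of v"
    show "x \<in> Aset v"
    proof (rule ccontr)
      assume "x \<notin> Aset v"
      then have "- {y. x < y} \<in> v" using uf_compl[OF v] unfolding Aset_def by auto
      moreover have "- {y. x < y} = {y. y \<le> x}" by auto
      ultimately have "I_of v \<subseteq> {y. y \<le> x}" using I_sub init_le by metis
      then show False using I_nomax[OF v np I x] by auto
    qed
  qed
  then show ?thesis by auto
qed

lemma B_L:
  fixes v :: "'a::linorder set set"
  assumes v: "is_ultrafilter v" and np: "\<not> is_principal v" and I: "I_of v \<in> v"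
  shows "Bset v = I_of v"
proof -
  have "x \<in> Bset v \<longleftrightarrow> x \<in> I_of v" for x
  proof
    assume "x \<in> Bset v"
    then have gx: "{y. x \<le> y} \<in> v" unfolding Bset_def by auto
    show "x \<in> I_of v"
    proof (rule ccontr)
      assume nx: "x \<notin> I_of v"
      have "I_of v \<inter> {y. x \<le> y} = {}"
        using nx I_initial[of v] unfolding initial_seg_def by auto
      then show False using uf_int[OF v I gx] uf_empty[OF v] by auto
    qed
  next
    assume x: "x \<in> I_of v"
    show "x \<in> Bset v"
    proof (rule ccontr)
      assume "x \<notin> Bset v"
      then have "- {y. x \<le> y} \<in> v" using uf_compl[OF v] unfolding Bset_def by auto
      moreover have "- {y. x \<le> y} = {y. y < x}" by auto
      ultimately have "I_of v \<subseteq> {y. y < x}" using I_sub init_lt by metis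
      then show False using x by auto
    qed
  qed
  then show ?thesis by auto
qed

lemma A_R:
  fixes v :: "'a::linorder set set"
  assumes v: "is_ultrafilter v" and np: "\<not> is_principal v" and J: "J_of v \<in> v"
  shows "Aset v = - J_of v"
proof -
  have "x \<in> Aset v \<longleftrightarrow> x \<notin> J_of v" for x
  proof
    assume "x \<in> Aset v"
    then have gx: "{y. x < y} \<in> v" unfolding Aset_def by auto
    then have "J_of v \<subseteq> {y. x < y}" using J_sub fin_gt by blast
    then show "x \<notin> J_of v" by auto
  next
    assume x: "x \<notin> J_of v"
    have "J_of v \<subseteq> {y. x < y}"
      using x J_final[of v] unfolding final_seg_def by (metis mem_Collect_eq not_less subsetI)
    then show "x \<in> Aset v" using uf_up[OF v J] unfolding Aset_def by auto
  qed
  then show ?thesis by auto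
qed

lemma B_R:
  fixes v :: "'a::linorder set set"
  assumes v: "is_ultrafilter v" and np: "\<not> is_principal v" and J: "J_of v \<in> v"
  shows "Bset v = - J_of v"
proof -
  have "x \<in> Bset v \<longleftrightarrow> x \<notin> J_of v" for x
  proof
    assume "x \<in> Bset v"
    then have gx: "{y. x \<le> y} \<in> v" unfolding Bset_def by auto
    then have "J_of v \<subseteq> {y. x \<le> y}" using J_sub fin_ge by blast
    then show "x \<notin> J_of v" using J_nomin[OF v np J] by force
  next
    assume x: "x \<notin> J_of v"
    have "J_of v \<subseteq> {y. x \<le> y}"
      using x J_final[of v] unfolding final_seg_def by (metis mem_Collect_eq linear subsetI)
    then show "x \<in> Bset v" using uf_up[OF v J] unfolding Bset_def by auto
  qed
  then show ?thesis by auto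
qed

lemma mem_L: "I_of u \<in> u \<Longrightarrow> is_ultrafilter u \<Longrightarrow> initial_seg S \<Longrightarrow> (S \<in> u) = (I_of u \<subseteq> S)"
  using I_sub uf_up by blast

lemma mem_R:
  fixes u :: "'a::linorder set set"
  assumes u: "is_ultrafilter u" and J: "J_of u \<in> u" and S: "initial_seg S"
  shows "(S \<in> u) = (S \<inter> J_of u \<noteq> {})"
proof
  assume "S \<in> u" then show "S \<inter> J_of u \<noteq> {}" using uf_int[OF u _ J] uf_empty[OF u] by fastforce
next
  assume ne: "S \<inter> J_of u \<noteq> {}"
  show "S \<in> u"
  proof (rule ccontr)
    assume "S \<notin> u"
    then have "- S \<in> u" using uf_compl[OF u] by blast
    moreover have "final_seg (- S)" using S unfolding initial_seg_def final_seg_def by auto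
    ultimately have "J_of u \<subseteq> - S" using J_sub by blast
    then show False using ne by auto
  qed
qed

lemma fin_compl_init: "final_seg J \<Longrightarrow> initial_seg (- J)"
  unfolding initial_seg_def final_seg_def by auto

lemma init_comp: "initial_seg (I::'a::linorder set) \<Longrightarrow> initial_seg I' \<Longrightarrow> I \<subseteq> I' \<or> I' \<subseteq> I"
  unfolding initial_seg_def by (meson linear subsetI)
lemma fin_comp: "final_seg (J::'a::linorder set) \<Longrightarrow> final_seg J' \<Longrightarrow> J \<subseteq> J' \<or> J' \<subseteq> J"
  unfolding final_seg_def by (meson linear subsetI)

lemma init_sub_lt: "initial_seg I \<Longrightarrow> (I \<subseteq> {x. x < (y::'a::linorder)}) = (y \<notin> I)"
  unfolding initial_seg_def by (auto simp: not_less) (metis not_le)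
lemma init_sub_le: assumes a0: "initial_seg I" "\<forall>x\<in>I. \<exists>z\<in>I. x < z"
  shows "(I \<subseteq> {x. x \<le> (y::'a::linorder)}) = (y \<notin> I)"
proof
  assume a3: "I \<subseteq> {x. x \<le> y}"
  note a = a0 a3
  show "y \<notin> I"
  proof
    assume "y \<in> I"
    then obtain z where "z \<in> I" "y < z" using a(2) by blast
    then show False using a(3) by auto
  qed
next
  assume "y \<notin> I"
  note a = a0(1) this
  show "I \<subseteq> {x. x \<le> y}"
  proof
    fix x assume "x \<in> I"
    then show "x \<in> {x. x \<le> y}" using a unfolding initial_seg_def by (metis mem_Collect_eq linear)
  qed
qed
lemma fin_int_le: "final_seg J \<Longrightarrow> ({x. x \<le> (y::'a::linorder)} \<inter> J \<noteq> {}) = (y \<in> J)"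
  unfolding final_seg_def by auto
lemma fin_int_lt: "final_seg J \<Longrightarrow> (\<forall>x\<in>J. \<exists>z\<in>J. z < x) \<Longrightarrow> ({x. x < (y::'a::linorder)} \<inter> J \<noteq> {}) = (y \<in> J)"
  unfolding final_seg_def by (auto dest: less_imp_le)

lemma init_out: "initial_seg I \<Longrightarrow> x \<in> I \<Longrightarrow> y \<notin> I \<Longrightarrow> x < (y::'a::linorder)"
  unfolding initial_seg_def by (metis not_less)

lemma fin_in: "final_seg J \<Longrightarrow> x \<in> J \<Longrightarrow> x \<le> (y::'a::linorder) \<Longrightarrow> y \<in> J"
  unfolding final_seg_def by blast

lemma kinds:
  fixes u :: "'a::linorder set set"
  assumes "is_ultrafilter u"
  shows "(\<exists>x. u = principal_uf x) \<or> (\<not> is_principal u \<and> I_of u \<in> u \<and> J_of u \<notin> u)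
     \<or> (\<not> is_principal u \<and> I_of u \<notin> u \<and> J_of u \<in> u)"
  using IJ_both[OF assms] J_in[OF assms] unfolding is_principal_def by blast

lemma ext_lt: "uf_ext (<) u v = (Aset v \<in> u)" unfolding uf_ext_def Aset_def by simp
lemma ext_le: "uf_ext (\<le>) u v = (Bset v \<in> u)" unfolding uf_ext_def Bset_def by simp
lemma ext_gt: "is_ultrafilter u \<Longrightarrow> is_ultrafilter v \<Longrightarrow> uf_ext (>) u v = (Bset v \<notin> u)"
proof -
  assume u: "is_ultrafilter u" and v: "is_ultrafilter v"
  have "{x. {y. y < x} \<in> v} = - Bset v"
    unfolding Bset_def using uf_compl_iff[OF v, of "{y. x \<le> y}" for x]
    by (auto simp: Compl_eq not_le[symmetric])
  then show ?thesis unfolding uf_ext_def using uf_compl_iff[OF u] by simp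
qed
lemma ext_ge: "is_ultrafilter u \<Longrightarrow> is_ultrafilter v \<Longrightarrow> uf_ext (\<ge>) u v = (Aset v \<notin> u)"
proof -
  assume u: "is_ultrafilter u" and v: "is_ultrafilter v"
  have "{x. {y. y \<le> x} \<in> v} = - Aset v"
    unfolding Aset_def using uf_compl_iff[OF v, of "{y. x < y}" for x]
    by (auto simp: Compl_eq not_less[symmetric])
  then show ?thesis unfolding uf_ext_def using uf_compl_iff[OF u] by simp
qed


theorem theorem1:
  fixes u v :: "'a::linorder set set"
  assumes "is_ultrafilter u" and "is_ultrafilter v"
  shows "(uf_ext (<) u v \<longleftrightarrow>
            supp_less (supp u) (supp v) \<or>
            (\<not> is_principal u \<and> \<not> is_principal v \<and> I_of u \<in> u \<and> I_of v \<in> v \<and> I_of u = I_of v))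
       \<and> (uf_ext (\<le>) u v \<longleftrightarrow>
            supp_less (supp u) (supp v) \<or>
            (\<not> is_principal u \<and> \<not> is_principal v \<and> I_of u \<in> u \<and> I_of v \<in> v \<and> I_of u = I_of v) \<or>
            (\<exists>x. u = principal_uf x \<and> v = principal_uf x))
       \<and> (uf_ext (>) u v \<longleftrightarrow>
            supp_less (supp v) (supp u) \<or>
            (\<not> is_principal u \<and> \<not> is_principal v \<and> J_of u \<in> u \<and> J_of v \<in> v \<and> J_of u = J_of v))
       \<and> (uf_ext (\<ge>) u v \<longleftrightarrow>
            supp_less (supp v) (supp u) \<or>
            (\<not> is_principal u \<and> \<not> is_principal v \<and> J_of u \<in> u \<and> J_of v \<in> v \<and> J_of u = J_of v) \<or>
            (\<exists>x. u = principal_uf x \<and> v = principal_uf x))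
       \<and> (\<not> is_principal u \<and> \<not> is_principal v \<longrightarrow>
            (uf_ext (<) u v \<longleftrightarrow> uf_ext (\<le>) u v) \<and> (uf_ext (>) u v \<longleftrightarrow> uf_ext (\<ge>) u v))"
proof -
  have pe: "\<And>x y. (principal_uf x = principal_uf y) = (x = y)" using principal_inj by auto
  have memP: "\<And>x S. (S \<in> principal_uf x) = (x \<in> S)" unfolding principal_uf_def by simp
  have u: "is_ultrafilter u" and v: "is_ultrafilter v" using assms by auto
  note E = ext_lt ext_le ext_gt[OF assms] ext_ge[OF assms]
  from kinds[OF u] show ?thesis
  proof (elim disjE exE conjE)
    fix x assume ux: "u = principal_uf x"
    from kinds[OF v] show ?thesis
    proof (elim disjE exE conjE)
      fix y assume vy: "v = principal_uf y"
      show ?thesis unfolding E unfolding ux vy A_P B_P supp_P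
        by (auto simp: pe memP is_principal_def)
    next
      assume np: "\<not> is_principal v" and I: "I_of v \<in> v" and J: "J_of v \<notin> v"
      show ?thesis unfolding E unfolding A_L[OF v np I] B_L[OF v np I] supp_L[OF np I] ux supp_P
        using np J by (auto simp: memP is_principal_def)
    next
      assume np: "\<not> is_principal v" and I: "I_of v \<notin> v" and J: "J_of v \<in> v"
      show ?thesis unfolding E unfolding A_R[OF v np J] B_R[OF v np J] supp_R[OF np I] ux supp_P
        using np I by (auto simp: memP is_principal_def)
    qed
  next
    assume npu: "\<not> is_principal u" and Iu: "I_of u \<in> u" and Ju: "J_of u \<notin> u"
    have mu: "\<And>S. initial_seg S \<Longrightarrow> (S \<in> u) = (I_of u \<subseteq> S)" using mem_L[OF Iu u] .
    have nm: "\<forall>x\<in>I_of u. \<exists>z\<in>I_of u. x < z" using I_nomax[OF u npu Iu] by blast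
    from kinds[OF v] show ?thesis
    proof (elim disjE exE conjE)
      fix y assume vy: "v = principal_uf y"
      show ?thesis unfolding E unfolding vy A_P B_P supp_P supp_L[OF npu Iu]
        using mu[OF init_lt] mu[OF init_le] init_sub_lt[OF I_initial] init_sub_le[OF I_initial nm]
          npu Ju init_out[OF I_initial[of u]] by (auto simp: is_principal_def)
    next
      assume np: "\<not> is_principal v" and I: "I_of v \<in> v" and J: "J_of v \<notin> v"
      show ?thesis unfolding E unfolding A_L[OF v np I] B_L[OF v np I] supp_L[OF np I] supp_L[OF npu Iu]
        using mu[OF I_initial] init_comp[OF I_initial I_initial, of u v] np J npu Ju I Iu
        by (auto simp: is_principal_def)
    next
      assume np: "\<not> is_principal v" and I: "I_of v \<notin> v" and J: "J_of v \<in> v"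
      show ?thesis unfolding E unfolding A_R[OF v np J] B_R[OF v np J] supp_R[OF np I] supp_L[OF npu Iu]
        using mu[OF fin_compl_init[OF J_final]] np I npu Ju J Iu
        by (auto simp: is_principal_def)
    qed
  next
    assume npu: "\<not> is_principal u" and Iu: "I_of u \<notin> u" and Ju: "J_of u \<in> u"
    have mu: "\<And>S. initial_seg S \<Longrightarrow> (S \<in> u) = (S \<inter> J_of u \<noteq> {})" using mem_R[OF u Ju] .
    have nm: "\<forall>x\<in>J_of u. \<exists>z\<in>J_of u. z < x" using J_nomin[OF u npu Ju] by blast
    from kinds[OF v] show ?thesis
    proof (elim disjE exE conjE)
      fix y assume vy: "v = principal_uf y"
      show ?thesis unfolding E unfolding vy A_P B_P supp_P supp_R[OF npu Iu]
        using mu[OF init_lt] mu[OF init_le] fin_int_le[OF J_final] fin_int_lt[OF J_final nm]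
          npu Iu fin_in[OF J_final[of u]] by (auto simp: is_principal_def)
    next
      assume np: "\<not> is_principal v" and I: "I_of v \<in> v" and J: "J_of v \<notin> v"
      show ?thesis unfolding E unfolding A_L[OF v np I] B_L[OF v np I] supp_L[OF np I] supp_R[OF npu Iu]
        using mu[OF I_initial] np J npu Iu I Ju
        by (auto simp: is_principal_def)
    next
      assume np: "\<not> is_principal v" and I: "I_of v \<notin> v" and J: "J_of v \<in> v"
      show ?thesis unfolding E unfolding A_R[OF v np J] B_R[OF v np J] supp_R[OF np I] supp_R[OF npu Iu]
        using mu[OF fin_compl_init[OF J_final]] fin_comp[OF J_final J_final, of u v] np I npu Iu J Ju
        by (auto simp: is_principal_def)
    qed
  qed
qed

end
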